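(* Let $G\le\mathcal{S}_n$ be a $2$-homogeneous group such that the setwise stabiliser in $G$ of a $2$-subset of $\Omega$ is transitive on the remaining $n-2$ points. Then the stabiliser in $G$ of a point $p$ is transitive on the $2$-subsets of $\Omega$ not containing $p$.
   Context: $\Omega=\{1,\ldots,n\}$; $G$ is $2$-homogeneous if it is transitive on the $2$-element subsets of $\Omega$. *)

theory Defs
  imports "HOL-Algebra.Sym_Groups"
begin

definition two_subsets :: "nat set \<Rightarrow> nat set set" where
  "two_subsets X = {A. A \<subseteq> X \<and> card A = 2}"

definition two_homogeneous :: "nat \<Rightarrow> (nat \<Rightarrow> nat) set \<Rightarrow> bool" where
  "two_homogeneous n G \<longleftrightarrow>
     (\<forall>A \<in> two_subsets {1..n}. \<forall>B \<in> two_subsets {1..n}. \<exists>g \<in> G. g ` A = B)"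

end

theory Submission
  imports Defs
begin

theorem corollary3p3:
  fixes n :: nat and G :: "(nat \<Rightarrow> nat) set"
  assumes "subgroup G (sym_group n)"
    and "two_homogeneous n G"
    and "\<forall>A \<in> two_subsets {1..n}. \<forall>x \<in> {1..n} - A. \<forall>y \<in> {1..n} - A.
           \<exists>g \<in> G. g ` A = A \<and> g x = y"
    and "p \<in> {1..n}"
  shows "\<forall>A \<in> two_subsets ({1..n} - {p}). \<forall>B \<in> two_subsets ({1..n} - {p}).
           \<exists>g \<in> G. g p = p \<and> g ` A = B"
proof (intro ballI)
  fix A B assume A: "A \<in> two_subsets ({1..n} - {p})" and B: "B \<in> two_subsets ({1..n} - {p})"
  have A1: "A \<in> two_subsets {1..n}" and B1: "B \<in> two_subsets {1..n}"
    using A B unfolding two_subsets_def by auto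
  have pA: "p \<notin> A" "p \<notin> B" using A B unfolding two_subsets_def by auto
  obtain h where h: "h \<in> G" "h ` A = B"
    using assms(2) A1 B1 unfolding two_homogeneous_def by meson
  have "h \<in> carrier (sym_group n)" using h(1) subgroup.subset[OF assms(1)] by blast
  then have hp: "h permutes {1..n}" by (simp add: sym_group_carrier)
  have inj: "inj h" using hp by (rule permutes_inj)
  have hpin: "h p \<in> {1..n}" using hp assms(4) by (simp only: permutes_in_image)
  have hpB: "h p \<notin> B"
  proof
    assume "h p \<in> B"
    then obtain a where "a \<in> A" "h p = h a" using h(2) by blast
    then have "p = a" using inj by (simp add: inj_eq)
    then show False using pA(1) \<open>a \<in> A\<close> by simp
  qed
  have x: "h p \<in> {1..n} - B" using hpin hpB by simp
  have y: "p \<in> {1..n} - B" using assms(4) pA(2) by simp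
  obtain k where k: "k \<in> G" "k ` B = B" "k (h p) = p"
    using assms(3) B1 x y by meson
  have "k \<otimes>\<^bsub>sym_group n\<^esub> h \<in> G" using subgroup.m_closed[OF assms(1) k(1) h(1)] .
  hence "k \<circ> h \<in> G" by (simp add: sym_group_mult)
  moreover have "(k \<circ> h) p = p" using k(3) by simp
  moreover have "(k \<circ> h) ` A = B" using k(2) h(2) by (simp only: image_comp[symmetric])
  ultimately show "\<exists>g\<in>G. g p = p \<and> g ` A = B" by blast
qed

end
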